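(* Let $b\in(1,n)$ be an integer dividing $n$. For any $\mathbf{M}\in\mathcal{M}\mathcal{M}^{*(b,n)}$ there exist $\mathbf{L}_1,\mathbf{L}_2\in\mathcal{B}\mathcal{D}^{(n/b,n)}$ and $\mathbf{R}\in\mathcal{B}\mathcal{D}^{(b,n)}$ such that $\mathbf{M}=(\mathbf{P}_{(b,n)}^\top\mathbf{L}_1\mathbf{P}_{(b,n)})\mathbf{R}(\mathbf{P}_{(b,n)}^\top\mathbf{L}_2\mathbf{P}_{(b,n)})$.
   Context: Indices are 0-based; matrices over $\mathbb{F}\in\{\mathbb{R},\mathbb{C}\}$, $^*$ is conjugate transpose. For $c$ dividing $n$, $\mathcal{B}\mathcal{D}^{(c,n)}$ is the class of $n\times n$ block-diagonal matrices $\mathrm{diag}(\mathbf{R}_0,\dots,\mathbf{R}_{n/c-1})$ with arbitrary $c\times c$ blocks; $\mathcal{D}\mathcal{B}^{(c,n)}$ is the class of $n\times n$ matrices which, partitioned into an $(n/c)\times(n/c)$ grid of $c\times c$ blocks, have every block diagonal. $\mathcal{M}^{(b,n)}$ is the class of products $\mathbf{L}\mathbf{R}$ with $\mathbf{L}\in\mathcal{D}\mathcal{B}^{(b,n)}$, $\mathbf{R}\in\mathcal{B}\mathcal{D}^{(b,n)}$, and $\mathcal{M}\mathcal{M}^{*(b,n)}$ is the class of products $\mathbf{M}_1\mathbf{M}_2^*$ with $\mathbf{M}_1,\mathbf{M}_2\in\mathcal{M}^{(b,n)}$. For $0\le i<n$ write $i=i_1b+i_0$ with $0\le i_0<b$ and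 set $\sigma_{(b,n)}(i)=i_0\frac{n}{b}+i_1$; $\mathbf{P}_{(b,n)}$ is the permutation matrix of $\sigma_{(b,n)}$, so that $(\mathbf{P}_{(b,n)}\mathbf{X}\mathbf{P}_{(b,n)}^\top)[\sigma_{(b,n)}(i),\sigma_{(b,n)}(j)]=\mathbf{X}[i,j]$. *)

theory Defs
  imports "HOL-Analysis.Analysis"
begin

text \<open>Matrices of size n x n are represented as functions nat => nat => 'a, with
  entries outside {0..<n} x {0..<n} required to be zero (see is_mat).\<close>

type_synonym 'a mat = "nat \<Rightarrow> nat \<Rightarrow> 'a"

definition is_mat :: "nat \<Rightarrow> 'a::zero mat \<Rightarrow> bool" where
  "is_mat n A \<longleftrightarrow> (\<forall>i j. (i \<ge> n \<or> j \<ge> n) \<longrightarrow> A i j = 0)"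

definition mmul :: "nat \<Rightarrow> 'a::comm_semiring_1 mat \<Rightarrow> 'a mat \<Rightarrow> 'a mat" where
  "mmul n A B = (\<lambda>i j. if i < n \<and> j < n then (\<Sum>k<n. A i k * B k j) else 0)"

text \<open>Conjugate transpose with respect to a conjugation cj (cj = id for real,
  cj = cnj for complex).\<close>
definition ctrans :: "('a \<Rightarrow> 'a) \<Rightarrow> 'a mat \<Rightarrow> 'a mat" where
  "ctrans cj A = (\<lambda>i j. cj (A j i))"

definition transp_mat :: "'a mat \<Rightarrow> 'a mat" where
  "transp_mat A = (\<lambda>i j. A j i)"

definition BD :: "nat \<Rightarrow> nat \<Rightarrow> 'a::zero mat \<Rightarrow> bool" where
  "BD c n A \<longleftrightarrow> is_mat n A \<and> (\<forall>i<n. \<forall>j<n. i div c \<noteq> j div c \<longrightarrow> A i j = 0)"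

text \<open>DB^(c,n): every c x c block is diagonal.\<close>
definition DB :: "nat \<Rightarrow> nat \<Rightarrow> 'a::zero mat \<Rightarrow> bool" where
  "DB c n A \<longleftrightarrow> is_mat n A \<and> (\<forall>i<n. \<forall>j<n. i mod c \<noteq> j mod c \<longrightarrow> A i j = 0)"

definition Monarch :: "nat \<Rightarrow> nat \<Rightarrow> 'a::comm_semiring_1 mat \<Rightarrow> bool" where
  "Monarch b n M \<longleftrightarrow> (\<exists>L R. DB b n L \<and> BD b n R \<and> M = mmul n L R)"

definition MMstar :: "('a \<Rightarrow> 'a) \<Rightarrow> nat \<Rightarrow> nat \<Rightarrow> 'a::comm_semiring_1 mat \<Rightarrow> bool" where
  "MMstar cj b n M \<longleftrightarrow>
     (\<exists>M1 M2. Monarch b n M1 \<and> Monarch b n M2 \<and> M = mmul n M1 (ctrans cj M2))"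

definition sigma_perm :: "nat \<Rightarrow> nat \<Rightarrow> nat \<Rightarrow> nat" where
  "sigma_perm b n i = (i mod b) * (n div b) + i div b"

text \<open>Permutation matrix P_(b,n): P[sigma i, i] = 1, so that
  (P X P^T)[sigma i, sigma j] = X[i,j].\<close>
definition Pmat :: "nat \<Rightarrow> nat \<Rightarrow> 'a::zero_neq_one mat" where
  "Pmat b n = (\<lambda>r i. if i < n \<and> r = sigma_perm b n i then 1 else 0)"

end

theory Submission
  imports Defs
begin

lemma mmul_assoc:
  fixes A B C :: "'a::comm_semiring_1 mat"
  shows "mmul n (mmul n A B) C = mmul n A (mmul n B C)"
proof -
  have "(\<Sum>k<n. (\<Sum>l<n. A i l * B l k) * C k j) = (\<Sum>l<n. A i l * (\<Sum>k<n. B l k * C k j))" for i j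
  proof -
    have "(\<Sum>k<n. (\<Sum>l<n. A i l * B l k) * C k j) = (\<Sum>k<n. \<Sum>l<n. A i l * B l k * C k j)"
      by (simp add: sum_distrib_right)
    also have "\<dots> = (\<Sum>l<n. \<Sum>k<n. A i l * B l k * C k j)" by (rule sum.swap)
    also have "\<dots> = (\<Sum>l<n. A i l * (\<Sum>k<n. B l k * C k j))"
      by (simp add: sum_distrib_left mult.assoc)
    finally show ?thesis .
  qed
  then show ?thesis unfolding mmul_def by (auto intro!: ext sum.cong)
qed

lemma cj_sum:
  assumes add: "\<And>x y. cj (x + y) = cj x + cj y" and z: "cj 0 = 0"
  shows "cj (sum f A) = (\<Sum>a\<in>A. cj (f a))"
proof (cases "finite A")
  case True
  then show ?thesis by (induction A rule: finite_induct) (simp_all add: add z)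
qed (simp add: z)

lemma ctrans_mmul:
  fixes A B :: "'a::comm_semiring_1 mat"
  assumes add: "\<And>x y. cj (x + y) = cj x + cj y" and z: "cj 0 = 0"
    and mul: "\<And>x y. cj (x * y) = cj x * cj y"
  shows "ctrans cj (mmul n A B) = mmul n (ctrans cj B) (ctrans cj A)"
  unfolding ctrans_def mmul_def
  by (auto intro!: ext simp: cj_sum[OF add z] mul z mult.commute)

lemma sigma_facts:
  fixes b n i :: nat
  assumes "0 < b" "b dvd n" "i < n"
  shows "sigma_perm b n i < n" "sigma_perm b n i div (n div b) = i mod b"
    "sigma_perm b n i mod (n div b) = i div b"
proof -
  define m where "m = n div b"
  have n: "n = b * m" using assms m_def by simp
  have idb: "i div b < m" using assms n by (simp add: div_less_iff_less_mult mult.commute)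
  have "i mod b < b" using assms by simp
  then have "(i mod b + 1) * m \<le> b * m" by (intro mult_right_mono) auto
  then show "sigma_perm b n i < n" using idb n unfolding sigma_perm_def m_def[symmetric] by simp
  show "sigma_perm b n i div (n div b) = i mod b"
    unfolding sigma_perm_def m_def[symmetric] using idb by simp
  show "sigma_perm b n i mod (n div b) = i div b"
    unfolding sigma_perm_def m_def[symmetric] using idb by simp
qed

definition tau :: "nat \<Rightarrow> nat \<Rightarrow> nat \<Rightarrow> nat" where
  "tau b n r = (r mod (n div b)) * b + r div (n div b)"

lemma tau_facts:
  fixes b n r :: nat
  assumes "0 < b" "b dvd n" "r < n"
  shows "tau b n r mod b = r div (n div b)" "tau b n r < n"
proof -
  define m where "m = n div b"
  have n: "n = b * m" using assms m_def by simp
  have m0: "0 < m" using assms n by (cases "m = 0") auto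
  have rdm: "r div m < b" using assms n m0 by (simp add: div_less_iff_less_mult)
  show "tau b n r mod b = r div (n div b)" unfolding tau_def m_def[symmetric] using rdm by simp
  have "r mod m < m" using m0 by simp
  then have "(r mod m + 1) * b \<le> m * b" by (intro mult_right_mono) auto
  then show "tau b n r < n" using rdm n unfolding tau_def m_def[symmetric] by (simp add: mult.commute)
qed

lemma tau_sigma:
  assumes "0 < b" "b dvd n" "i < n"
  shows "tau b n (sigma_perm b n i) = i"
  using sigma_facts[OF assms] unfolding tau_def by simp

lemma conj_perm:
  fixes X :: "'a::comm_ring_1 mat"
  assumes b: "0 < b" "b dvd n" and X: "DB b n X"
  shows "\<exists>L1. BD (n div b) n L1 \<and> X = mmul n (mmul n (transp_mat (Pmat b n)) L1) (Pmat b n)"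
proof -
  define L1 where "L1 = (\<lambda>r s. if r < n \<and> s < n then X (tau b n r) (tau b n s) else (0::'a))"
  have "BD (n div b) n L1"
    unfolding BD_def is_mat_def L1_def
  proof (intro conjI allI impI)
    fix i j assume "i < n" "j < n" "i div (n div b) \<noteq> j div (n div b)"
    then show "(if i < n \<and> j < n then X (tau b n i) (tau b n j) else 0) = 0"
      using X tau_facts[OF b] unfolding DB_def by auto
  qed auto
  moreover have "X = mmul n (mmul n (transp_mat (Pmat b n)) L1) (Pmat b n)"
  proof (intro ext)
    fix i j
    show "X i j = mmul n (mmul n (transp_mat (Pmat b n)) L1) (Pmat b n) i j"
    proof (cases "i < n \<and> j < n")
      case False
      then show ?thesis using X unfolding DB_def is_mat_def mmul_def by auto
    next
      case True
      have s1: "(\<Sum>r<n. transp_mat (Pmat b n) i r * L1 r k) = L1 (sigma_perm b n i) k" for k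
        using True sigma_facts[OF b, of i]
        by (simp add: transp_mat_def Pmat_def if_distrib[of "\<lambda>x. x * _"] sum.delta cong: if_cong)
      have "(\<Sum>k<n. L1 (sigma_perm b n i) k * Pmat b n k j) = L1 (sigma_perm b n i) (sigma_perm b n j)"
        using True sigma_facts[OF b, of j]
        by (simp add: Pmat_def if_distrib[of "\<lambda>x. _ * x"] sum.delta cong: if_cong)
      moreover have "mmul n (mmul n (transp_mat (Pmat b n)) L1) (Pmat b n) i j
          = (\<Sum>k<n. L1 (sigma_perm b n i) k * Pmat b n k j)"
        using True s1 unfolding mmul_def[of n "mmul n _ _"] by (simp add: mmul_def)
      moreover have "L1 (sigma_perm b n i) (sigma_perm b n j) = X i j"
        using True sigma_facts[OF b] tau_sigma[OF b] unfolding L1_def by simp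
      ultimately show ?thesis by simp
    qed
  qed
  ultimately show ?thesis by blast
qed

lemma main:
  fixes cj :: "'a::comm_ring_1 \<Rightarrow> 'a" and M :: "'a mat"
  assumes add: "\<And>x y. cj (x + y) = cj x + cj y" and z: "cj 0 = 0"
    and mul: "\<And>x y. cj (x * y) = cj x * cj y"
    and b: "0 < b" "b dvd n" and MM: "MMstar cj b n M"
  shows "\<exists>L1 L2 R. BD (n div b) n L1 \<and> BD (n div b) n L2 \<and> BD b n R \<and>
               M = mmul n (mmul n (mmul n (transp_mat (Pmat b n)) L1) (Pmat b n))
                   (mmul n R (mmul n (mmul n (transp_mat (Pmat b n)) L2) (Pmat b n)))"
proof -
  obtain L R L' R' where h: "DB b n L" "BD b n R" "DB b n L'" "BD b n R'"
    and M: "M = mmul n (mmul n L R) (ctrans cj (mmul n L' R'))"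
    using MM unfolding MMstar_def Monarch_def by blast
  have M2: "M = mmul n L (mmul n (mmul n R (ctrans cj R')) (ctrans cj L'))"
    using M by (simp add: ctrans_mmul[OF add z mul] mmul_assoc)
  have R0: "BD b n (mmul n R (ctrans cj R'))"
    unfolding BD_def is_mat_def
  proof (intro conjI allI impI)
    fix i j assume "i < n" "j < n" "i div b \<noteq> j div b"
    then have "R i k * ctrans cj R' k j = 0" if "k < n" for k
      using h(2,4) that z unfolding BD_def ctrans_def by (cases "i div b = k div b") auto
    then show "mmul n R (ctrans cj R') i j = 0" unfolding mmul_def by simp
  qed (auto simp: mmul_def)
  have L'': "DB b n (ctrans cj L')"
    using h(3) z unfolding DB_def is_mat_def ctrans_def by auto
  obtain L1 where L1: "BD (n div b) n L1" "L = mmul n (mmul n (transp_mat (Pmat b n)) L1) (Pmat b n)"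
    using conj_perm[OF b h(1)] by blast
  obtain L2 where L2: "BD (n div b) n L2" "ctrans cj L' = mmul n (mmul n (transp_mat (Pmat b n)) L2) (Pmat b n)"
    using conj_perm[OF b L''] by blast
  show ?thesis using M2 L1 L2 R0 by metis
qed

theorem propositionC11:
  fixes b n :: nat
  assumes "1 < b" and "b < n" and "b dvd n"
  shows "(\<forall>M :: real mat. MMstar id b n M \<longrightarrow>
            (\<exists>L1 L2 R. BD (n div b) n L1 \<and> BD (n div b) n L2 \<and> BD b n R \<and>
               M = mmul n (mmul n (mmul n (transp_mat (Pmat b n)) L1) (Pmat b n))
                   (mmul n R (mmul n (mmul n (transp_mat (Pmat b n)) L2) (Pmat b n)))))
       \<and> (\<forall>M :: complex mat. MMstar cnj b n M \<longrightarrow>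
            (\<exists>L1 L2 R. BD (n div b) n L1 \<and> BD (n div b) n L2 \<and> BD b n R \<and>
               M = mmul n (mmul n (mmul n (transp_mat (Pmat b n)) L1) (Pmat b n))
                   (mmul n R (mmul n (mmul n (transp_mat (Pmat b n)) L2) (Pmat b n)))))"
proof -
  have b: "0 < b" using assms by simp
  show ?thesis
    using main[of id, OF _ _ _ b assms(3)] main[of cnj, OF _ _ _ b assms(3)] by auto
qed

end
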